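(* Let $G=\langle c,d\mid c^2=d^3\rangle$ be the fundamental group of the complement of the $(2,3)$-torus knot (trefoil) in $S^3$. If $\alpha,\beta\in G$ are conjugate in $G$ and $G=\langle\alpha,\beta\rangle$, then $\alpha$ and $\beta$ are peripheral.
   Context: An element of a knot group $\pi_1(S^3\smallsetminus K)$ is peripheral if it lies in a conjugate of the peripheral subgroup, i.e. the image of $\pi_1$ of the boundary torus of the knot exterior. *)

theory Defs
  imports "HOL-Algebra.Algebra"
begin

text \<open>The trefoil group G = < c, d | c^2 = d^3 >, constructed as the group given by
  this presentation: words in the letters c, d and their inverses, modulo the
  equivalence generated by free cancellation and by inserting/deleting the relator
  c c d^-1 d^-1 d^-1.\<close>

datatype gen = Cg | Dg

type_synonym letter = "bool \<times> gen"   \<comment> \<open>(False, g) = g,  (True, g) = g inverse\<close>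
type_synonym word = "letter list"

fun inv_letter :: "letter \<Rightarrow> letter" where
  "inv_letter (b, g) = (\<not> b, g)"

definition relator :: word where
  "relator = [(False, Cg), (False, Cg), (True, Dg), (True, Dg), (True, Dg)]"

inductive_set word_eq :: "(word \<times> word) set" where
  refl:   "(w, w) \<in> word_eq"
| sym:    "(u, v) \<in> word_eq \<Longrightarrow> (v, u) \<in> word_eq"
| trans:  "(u, v) \<in> word_eq \<Longrightarrow> (v, w) \<in> word_eq \<Longrightarrow> (u, w) \<in> word_eq"
| cancel: "(u @ [l, inv_letter l] @ v, u @ v) \<in> word_eq"
| rel:    "(u @ relator @ v, u @ v) \<in> word_eq"

definition trefoil_group :: "word set monoid" where
  "trefoil_group =
     \<lparr> carrier = UNIV // word_eq,
       monoid.mult = (\<lambda>A B. \<Union>a\<in>A. \<Union>b\<in>B. word_eq `` {a @ b}),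
       monoid.one = word_eq `` {[]} \<rparr>"

definition gen_c :: "word set" where
  "gen_c = word_eq `` {[(False, Cg)]}"

definition gen_d :: "word set" where
  "gen_d = word_eq `` {[(False, Dg)]}"

definition meridian :: "word set" where
  "meridian = inv\<^bsub>trefoil_group\<^esub> gen_d \<otimes>\<^bsub>trefoil_group\<^esub> gen_c"

definition longitude :: "word set" where
  "longitude = (gen_c [^]\<^bsub>trefoil_group\<^esub> (2::nat)) \<otimes>\<^bsub>trefoil_group\<^esub>
                  inv\<^bsub>trefoil_group\<^esub> (meridian [^]\<^bsub>trefoil_group\<^esub> (6::nat))"

definition peripheral_subgroup :: "word set set" where
  "peripheral_subgroup = generate trefoil_group {meridian, longitude}"

definition peripheral :: "word set \<Rightarrow> bool" where
  "peripheral g \<longleftrightarrow> (\<exists>x\<in>carrier trefoil_group. \<exists>p\<in>peripheral_subgroup.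
       g = x \<otimes>\<^bsub>trefoil_group\<^esub> p \<otimes>\<^bsub>trefoil_group\<^esub> inv\<^bsub>trefoil_group\<^esub> x)"

end

theory Submission
  imports Defs
begin

abbreviation E where "E \<equiv> word_eq"
definition cls :: "word \<Rightarrow> word set" where "cls w = word_eq `` {w}"

lemma E_refl[simp]: "(w,w) \<in> word_eq" by (rule word_eq.refl)

lemma E_append_right: "(u, v) \<in> word_eq \<Longrightarrow> (u @ x, v @ x) \<in> word_eq"
proof (induction rule: word_eq.induct)
  case (cancel u l v) then show ?case using word_eq.cancel[of u l "v@x"] by simp
next
  case (rel u v) then show ?case using word_eq.rel[of u "v@x"] by simp
qed (auto intro: word_eq.intros)

lemma E_append_left: "(u, v) \<in> word_eq \<Longrightarrow> (x @ u, x @ v) \<in> word_eq"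
proof (induction rule: word_eq.induct)
  case (cancel u l v) then show ?case using word_eq.cancel[of "x@u" l v] by simp
next
  case (rel u v) then show ?case using word_eq.rel[of "x@u" v] by simp
qed (auto intro: word_eq.intros)

lemma E_append: "(u, v) \<in> word_eq \<Longrightarrow> (x, y) \<in> word_eq \<Longrightarrow> (u @ x, v @ y) \<in> word_eq"
  by (meson E_append_left E_append_right word_eq.trans)

lemma equiv_E: "equiv UNIV word_eq"
  unfolding equiv_def refl_on_def sym_def trans_def
  by (auto intro: word_eq.intros)

lemma cls_eq_iff: "cls u = cls v \<longleftrightarrow> (u, v) \<in> word_eq"
  unfolding cls_def using eq_equiv_class_iff[OF equiv_E] by auto

lemma mem_cls: "x \<in> cls w \<longleftrightarrow> (w, x) \<in> word_eq" unfolding cls_def by auto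

lemma carrier_G: "carrier trefoil_group = range cls"
  unfolding trefoil_group_def cls_def quotient_def by auto

lemma cls_in[simp]: "cls w \<in> carrier trefoil_group" using carrier_G by auto

lemma mult_cls[simp]: "cls u \<otimes>\<^bsub>trefoil_group\<^esub> cls v = cls (u @ v)"
proof -
  have "(\<Union>a\<in>cls u. \<Union>b\<in>cls v. word_eq `` {a @ b}) = cls (u @ v)"
  proof (intro equalityI subsetI)
    fix x assume "x \<in> (\<Union>a\<in>cls u. \<Union>b\<in>cls v. word_eq `` {a @ b})"
    then obtain a b where "(u,a) \<in> E" "(v,b) \<in> E" "(a@b, x) \<in> E" by (auto simp: mem_cls)
    then show "x \<in> cls (u@v)" unfolding mem_cls by (meson E_append word_eq.trans)
  next
    fix x assume "x \<in> cls (u@v)" 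
    then have "x \<in> word_eq `` {u @ v}" by (simp add: cls_def)
    moreover have "u \<in> cls u" "v \<in> cls v" by (auto simp: mem_cls)
    ultimately show "x \<in> (\<Union>a\<in>cls u. \<Union>b\<in>cls v. word_eq `` {a @ b})" by blast
  qed
  then show ?thesis unfolding trefoil_group_def by (simp add: cls_def)
qed

lemma one_cls: "\<one>\<^bsub>trefoil_group\<^esub> = cls []" unfolding trefoil_group_def cls_def by simp

definition iw :: "word \<Rightarrow> word" where "iw w = rev (map inv_letter w)"

lemma inv_letter_inv[simp]: "inv_letter (inv_letter l) = l" by (cases l) auto

lemma iw_cancel: "(iw w @ w, []) \<in> word_eq"
proof (induction w)
  case Nil then show ?case by (simp add: iw_def)
next
  case (Cons l w)
  have "iw (l#w) @ l # w = iw w @ [inv_letter l, inv_letter (inv_letter l)] @ w" by (simp add: iw_def)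
  moreover have "(iw w @ [inv_letter l, inv_letter (inv_letter l)] @ w, iw w @ w) \<in> word_eq"
    by (rule word_eq.cancel)
  ultimately show ?case using Cons word_eq.trans by metis
qed

lemma group_G: "group trefoil_group"
proof (rule groupI)
  fix x y assume "x \<in> carrier trefoil_group" "y \<in> carrier trefoil_group"
  then show "x \<otimes>\<^bsub>trefoil_group\<^esub> y \<in> carrier trefoil_group" by (auto simp: carrier_G)
next
  show "\<one>\<^bsub>trefoil_group\<^esub> \<in> carrier trefoil_group" by (simp add: one_cls)
next
  fix x y z assume "x \<in> carrier trefoil_group" "y \<in> carrier trefoil_group" "z \<in> carrier trefoil_group"
  then show "x \<otimes>\<^bsub>trefoil_group\<^esub> y \<otimes>\<^bsub>trefoil_group\<^esub> z = x \<otimes>\<^bsub>trefoil_group\<^esub> (y \<otimes>\<^bsub>trefoil_group\<^esub> z)"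
    by (auto simp: carrier_G)
next
  fix x assume "x \<in> carrier trefoil_group"
  then show "\<one>\<^bsub>trefoil_group\<^esub> \<otimes>\<^bsub>trefoil_group\<^esub> x = x" by (auto simp: carrier_G one_cls)
next
  fix x assume "x \<in> carrier trefoil_group"
  then obtain w where "x = cls w" by (auto simp: carrier_G)
  then show "\<exists>y\<in>carrier trefoil_group. y \<otimes>\<^bsub>trefoil_group\<^esub> x = \<one>\<^bsub>trefoil_group\<^esub>"
  proof (intro bexI)
    show "cls (iw w) \<otimes>\<^bsub>trefoil_group\<^esub> x = \<one>\<^bsub>trefoil_group\<^esub>"
      using iw_cancel \<open>x = cls w\<close> by (simp add: one_cls cls_eq_iff)
  qed simp
qed

datatype m2 = M2 int int int int

instantiation m2 :: ring_1
begin
fun plus_m2 :: "m2 \<Rightarrow> m2 \<Rightarrow> m2" where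
  "M2 a b c d + M2 a2 b2 c2 d2 = M2 (a + a2) (b + b2) (c + c2) (d + d2)"
fun minus_m2 :: "m2 \<Rightarrow> m2 \<Rightarrow> m2" where
  "M2 a b c d - M2 a2 b2 c2 d2 = M2 (a-a2) (b-b2) (c-c2) (d-d2)"
fun uminus_m2 :: "m2 \<Rightarrow> m2" where
  "- M2 a b c d = M2 (-a) (-b) (-c) (-d)"
fun times_m2 :: "m2 \<Rightarrow> m2 \<Rightarrow> m2" where
  "M2 a b p d * M2 a2 b2 p2 d2 = M2 (a * a2 + b * p2) (a * b2 + b * d2) (p * a2 + d * p2) (p * b2 + d * d2)"
definition zero_m2 :: m2 where "0 = M2 0 0 0 0"
definition one_m2 :: m2 where "1 = M2 1 0 0 1"
instance
proof
  fix x y z :: m2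
  show "x * y * z = x * (y * z)" by (cases x; cases y; cases z) (simp add: algebra_simps)
  show "x + y + z = x + (y + z)" by (cases x; cases y; cases z) simp
  show "x + y = y + x" by (cases x; cases y) simp
  show "0 + x = x" by (cases x) (simp add: zero_m2_def)
  show "- x + x = 0" by (cases x) (simp add: zero_m2_def)
  show "x - y = x + - y" by (cases x; cases y) simp
  show "1 * x = x" by (cases x) (simp add: one_m2_def)
  show "x * 1 = x" by (cases x) (simp add: one_m2_def)
  show "(x + y) * z = x * z + y * z" by (cases x; cases y; cases z) (simp add: algebra_simps)
  show "x * (y + z) = x * y + x * z" by (cases x; cases y; cases z) (simp add: algebra_simps)
  show "(0::m2) \<noteq> 1" by (simp add: zero_m2_def one_m2_def)
qed
end

fun tr :: "m2 \<Rightarrow> int" where "tr (M2 a b c d) = a + d"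
fun det :: "m2 \<Rightarrow> int" where "det (M2 a b p d) = a * d - b * p"
fun adj :: "m2 \<Rightarrow> m2" where "adj (M2 a b c d) = M2 d (-b) (-c) a"
definition sc :: "int \<Rightarrow> m2" where "sc k = M2 k 0 0 k"

lemma one_m2: "(1::m2) = M2 1 0 0 1" by (simp add: one_m2_def)
lemma zero_m2: "(0::m2) = M2 0 0 0 0" by (simp add: zero_m2_def)

lemma adj_mult: "adj (x * y) = adj y * adj x" by (cases x; cases y) (simp add: algebra_simps)
lemma det_mult: "det (x * y) = det x * det y" by (cases x; cases y) (simp add: algebra_simps)
lemma tr_comm: "tr (x * y) = tr (y * x)" by (cases x; cases y) (simp add: algebra_simps)
lemma mult_adj: "x * adj x = sc (det x)" by (cases x) (simp add: sc_def algebra_simps)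
lemma adj_mult_self: "adj x * x = sc (det x)" by (cases x) (simp add: sc_def algebra_simps)
lemma adj_tr: "adj x = sc (tr x) - x" by (cases x) (simp add: sc_def)
lemma sc_mult: "sc k * x = x * sc k" by (cases x) (simp add: sc_def)
lemma sc1[simp]: "sc 1 = 1" by (simp add: sc_def one_m2)
lemma adj_adj[simp]: "adj (adj x) = x" by (cases x) simp
lemma adj_one[simp]: "adj 1 = 1" by (simp add: one_m2)
lemma det_adj[simp]: "det (adj x) = det x" by (cases x) simp
lemma tr_adj[simp]: "tr (adj x) = tr x" by (cases x) simp
lemma det_one[simp]: "det 1 = 1" by (simp add: one_m2)
lemma tr_neg[simp]: "tr (- x) = - tr x" by (cases x) simp

definition Sm :: m2 where "Sm = M2 0 (-1) 1 0"
definition Um :: m2 where "Um = M2 0 (-1) 1 1"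

fun phil :: "letter \<Rightarrow> m2" where
  "phil (False, Cg) = Sm" | "phil (True, Cg) = adj Sm"
| "phil (False, Dg) = Um" | "phil (True, Dg) = adj Um"

definition phiw :: "word \<Rightarrow> m2" where "phiw w = foldr (\<lambda>l M. phil l * M) w 1"

lemma phiw_append[simp]: "phiw (u @ v) = phiw u * phiw v"
  by (induction u) (auto simp: phiw_def mult.assoc)
lemma phiw_Nil[simp]: "phiw [] = 1" by (simp add: phiw_def)
lemma phiw_Cons[simp]: "phiw (l # w) = phil l * phiw w" by (simp add: phiw_def)

lemma det_phil[simp]: "det (phil l) = 1"
  by (cases l rule: phil.cases) (auto simp: Sm_def Um_def)

lemma phil_inv: "phil l * phil (inv_letter l) = 1"
  by (cases l rule: phil.cases) (auto simp: Sm_def Um_def one_m2)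

lemma phiw_E: "(u, v) \<in> word_eq \<Longrightarrow> phiw u = phiw v"
proof (induction rule: word_eq.induct)
  case (cancel u l v)
  have "phil l * (phil (inv_letter l) * phiw v) = phiw v"
    using phil_inv by (simp add: mult.assoc[symmetric])
  then show ?case by simp
next
  case (rel u v)
  have "phiw relator = 1" by (simp add: relator_def Sm_def Um_def one_m2)
  then show ?case by simp
qed auto

definition Phi :: "word set \<Rightarrow> m2" where "Phi A = phiw (SOME w. A = cls w)"

lemma Phi_cls[simp]: "Phi (cls w) = phiw w"
proof -
  have "cls w = cls (SOME w'. cls w = cls w')" by (rule someI) simp
  then show ?thesis unfolding Phi_def cls_eq_iff by (metis phiw_E)
qed

lemma det_phiw[simp]: "det (phiw w) = 1"
  by (induction w) (auto simp: det_mult)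

lemma inv_cls: "inv\<^bsub>trefoil_group\<^esub> (cls w) = cls (iw w)"
  using group.inv_equality[OF group_G, of "cls (iw w)" "cls w"] iw_cancel
  by (simp add: one_cls cls_eq_iff)

lemma phiw_iw: "phiw (iw w) = adj (phiw w)"
proof (induction w)
  case (Cons l w)
  have "adj (phil l) = phil (inv_letter l)"
    by (cases l rule: phil.cases) (auto simp: Sm_def Um_def)
  then show ?case using Cons by (simp add: iw_def adj_mult)
qed (simp add: iw_def)

lemma Phi_mult: "x \<in> carrier trefoil_group \<Longrightarrow> y \<in> carrier trefoil_group \<Longrightarrow>
  Phi (x \<otimes>\<^bsub>trefoil_group\<^esub> y) = Phi x * Phi y"
  by (auto simp: carrier_G)
lemma Phi_inv: "x \<in> carrier trefoil_group \<Longrightarrow> Phi (inv\<^bsub>trefoil_group\<^esub> x) = adj (Phi x)"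
  by (auto simp: carrier_G inv_cls phiw_iw)
lemma Phi_one: "Phi \<one>\<^bsub>trefoil_group\<^esub> = 1" by (simp add: one_cls)
lemma det_Phi: "x \<in> carrier trefoil_group \<Longrightarrow> det (Phi x) = 1" by (auto simp: carrier_G)

fun mz :: "int \<Rightarrow> m2 \<Rightarrow> bool" where
  "mz m (M2 a b p d) = (m dvd a \<and> m dvd b \<and> m dvd p \<and> m dvd d)"

definition mc :: "int \<Rightarrow> m2 \<Rightarrow> m2 \<Rightarrow> bool" where "mc m Xm Ym = mz m (Xm - Ym)"

lemma mz_add: "mz m Xm \<Longrightarrow> mz m Ym \<Longrightarrow> mz m (Xm + Ym)" by (cases Xm; cases Ym) auto
lemma mz_neg: "mz m Xm \<Longrightarrow> mz m (- Xm)" by (cases Xm) auto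
lemma mz_multl: "mz m Xm \<Longrightarrow> mz m (Ym * Xm)" by (cases Xm; cases Ym) auto
lemma mz_multr: "mz m Xm \<Longrightarrow> mz m (Xm * Ym)" by (cases Xm; cases Ym) auto
lemma mz_zero: "mz m 0" by (simp add: zero_m2)

lemma mc_refl[simp]: "mc m Xm Xm" by (simp add: mc_def mz_zero)
lemma mc_sym: "mc m Xm Ym \<Longrightarrow> mc m Ym Xm"
  unfolding mc_def using mz_neg by (metis minus_diff_eq)
lemma mc_trans: "mc m Xm Ym \<Longrightarrow> mc m Ym Zm \<Longrightarrow> mc m Xm Zm"
  unfolding mc_def using mz_add by (metis diff_add_cancel add_diff_eq diff_diff_eq2 add.commute)
lemma mc_mult: "mc m Xm Xm2 \<Longrightarrow> mc m Ym Ym2 \<Longrightarrow> mc m (Xm * Ym) (Xm2 * Ym2)"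
proof -
  assume a: "mc m Xm Xm2" "mc m Ym Ym2"
  have "Xm * Ym - Xm2 * Ym2 = (Xm - Xm2) * Ym + Xm2 * (Ym - Ym2)" by (simp add: algebra_simps)
  then show ?thesis using a unfolding mc_def by (metis mz_add mz_multl mz_multr)
qed
lemma mc_neg: "mc m Xm Ym \<Longrightarrow> mc m (- Xm) (- Ym)"
  unfolding mc_def using mz_neg by (metis minus_diff_minus minus_diff_eq)

lemma mc_multl: "mc m Ym Ym2 \<Longrightarrow> mc m (Xm * Ym) (Xm * Ym2)" by (rule mc_mult) auto
lemma mc_multr: "mc m Xm Xm2 \<Longrightarrow> mc m (Xm * Ym) (Xm2 * Ym)" by (rule mc_mult) auto

lemma CH: "Xm * Xm = sc (tr Xm) * Xm - sc (det Xm)"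
  by (cases Xm) (simp add: sc_def algebra_simps)

lemma mz_sc: "m dvd k \<Longrightarrow> mz m (sc k * Xm)" by (cases Xm) (simp add: sc_def)

lemma adj_cong: "m dvd tr Xm \<Longrightarrow> mc m (adj Xm) (- Xm)"
  unfolding mc_def adj_tr by (cases Xm) (simp add: sc_def add.commute)

lemma sq_cong: "m dvd tr Xm \<Longrightarrow> det Xm = 1 \<Longrightarrow> mc m (Xm * Xm) (- 1)"
  unfolding mc_def CH by (simp add: mz_sc)

definition V0 :: m2 where "V0 = Sm * Um * adj Sm"

definition closedQ :: "(m2 \<Rightarrow> bool) \<Rightarrow> bool" where
  "closedQ Q \<longleftrightarrow> Q 1 \<and> (\<forall>Xm Ym. Q Xm \<longrightarrow> Q Ym \<longrightarrow> Q (Xm * Ym))"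

definition genprop :: "m2 \<Rightarrow> m2 \<Rightarrow> bool" where
  "genprop A B \<longleftrightarrow> (\<forall>Q. closedQ Q \<longrightarrow> Q A \<longrightarrow> Q (adj A) \<longrightarrow> Q B \<longrightarrow> Q (adj B) \<longrightarrow>
       Q Sm \<and> Q Um \<and> Q V0)"

lemma odd_form:
  assumes "det Xm = 1" "odd (tr Xm)"
  shows "mc 2 Xm Um \<or> mc 2 Xm (adj Um)"
proof (cases Xm)
  case (M2 a b p d)
  with assms have h: "a*d - b*p = 1" "odd (a + d)" by auto
  then have "even (a * d)" by auto
  with h have "odd (b * p)" by (metis even_add diff_add_cancel odd_one)
  then have ob: "odd b" "odd p" by auto
  show ?thesis
  proof (cases "even a")
    case True
    then have "odd d" using h by auto
    then show ?thesis using True ob M2 by (auto simp: mc_def Um_def)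
  next
    case False
    then have "even d" using h by auto
    then show ?thesis using False ob M2 by (auto simp: mc_def Um_def)
  qed
qed

lemma odd_case_false:
  assumes "det A = 1" "det B = 1" "tr B = tr A" "odd (tr A)" "genprop A B"
  shows False
proof -
  define Q where "Q Xm \<longleftrightarrow> mc 2 Xm 1 \<or> mc 2 Xm Um \<or> mc 2 Xm (adj Um)" for Xm
  have prod: "\<exists>Zm\<in>{1, Um, adj Um}. mc 2 (Xm0 * Ym0) Zm" if "Xm0 \<in> {1, Um, adj Um}" "Ym0 \<in> {1, Um, adj Um}" for Xm0 Ym0
    using that by (auto simp: Um_def one_m2 mc_def zero_m2)
  have "closedQ Q"
    unfolding closedQ_def
  proof (intro conjI allI impI)
    show "Q 1" by (simp add: Q_def)
    fix Xm Ym assume "Q Xm" "Q Ym"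
    then obtain Xm0 Ym0 where x: "Xm0 \<in> {1, Um, adj Um}" "mc 2 Xm Xm0" and y: "Ym0 \<in> {1, Um, adj Um}" "mc 2 Ym Ym0"
      unfolding Q_def by blast
    obtain Zm where "Zm \<in> {1, Um, adj Um}" "mc 2 (Xm0 * Ym0) Zm" using prod[OF x(1) y(1)] by blast
    then show "Q (Xm * Ym)" unfolding Q_def using mc_mult[OF x(2) y(2)] mc_trans by blast
  qed
  moreover have "Q A" "Q (adj A)" "Q B" "Q (adj B)"
    using odd_form assms unfolding Q_def by (metis det_adj tr_adj)+
  ultimately have "Q Sm" using assms(5) unfolding genprop_def by blast
  then show False by (auto simp: Q_def Sm_def Um_def one_m2 mc_def)
qed

definition sg :: "bool \<Rightarrow> m2" where "sg s = (if s then -1 else 1)"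
definition Ar :: "m2 \<Rightarrow> bool \<Rightarrow> m2" where "Ar A r = (if r then A else 1)"

lemma sg_comm: "sg s * M = M * sg s" by (simp add: sg_def)
lemma sg_mult: "sg s1 * sg s2 = sg (s1 \<noteq> s2)" by (simp add: sg_def)

locale dih =
  fixes A B :: m2 and m :: int
  assumes dA: "det A = 1" and dB: "det B = 1" and tAB: "tr B = tr A" and mt: "m dvd tr A"
begin

definition "Cm = A * B"
definition "Dm = adj Cm"

lemma CD: "Cm * Dm = 1" unfolding Dm_def using mult_adj[of Cm] by (simp add: Cm_def det_mult dA dB)
lemma DC: "Dm * Cm = 1" unfolding Dm_def using adj_mult_self[of Cm] by (simp add: Cm_def det_mult dA dB)

lemma CDcomm: "Dm ^ b * Cm ^ a = Cm ^ a * Dm ^ b"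
proof -
  have "Dm * Cm = Cm * Dm" using CD DC by simp
  then have "Dm * Cm ^ a = Cm ^ a * Dm" by (metis power_commuting_commutes)
  then show ?thesis by (metis power_commuting_commutes)
qed

lemma PP: "(Cm ^ a1 * Dm ^ b1) * (Cm ^ a2 * Dm ^ b2) = Cm ^ (a1 + a2) * Dm ^ (b1 + b2)"
proof -
  have "(Cm ^ a1 * Dm ^ b1) * (Cm ^ a2 * Dm ^ b2) = Cm ^ a1 * (Dm ^ b1 * Cm ^ a2) * Dm ^ b2"
    by (simp add: mult.assoc)
  also have "\<dots> = Cm ^ (a1 + a2) * Dm ^ (b1 + b2)" by (simp add: CDcomm power_add mult.assoc)
  finally show ?thesis .
qed

lemma CkDk: "Cm ^ k * Dm ^ k = 1" using left_right_inverse_power[OF CD] .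

lemma AA: "mc m (A * A) (-1)" using sq_cong[OF mt dA] .
lemma adjA: "mc m (adj A) (- A)" using adj_cong[OF mt] .
lemma adjB: "mc m (adj B) (- B)" using adj_cong[of m B] mt tAB by simp

lemma AC: "mc m (A * Cm) (Dm * A)"
proof -
  have "A * Cm = (A * A) * B" by (simp add: Cm_def mult.assoc)
  moreover have "mc m ((A * A) * B) (- B)" using mc_multr[OF AA, of B] by simp
  moreover have "Dm * A = adj B" unfolding Dm_def Cm_def adj_mult mult.assoc adj_mult_self dA by simp
  ultimately show ?thesis using adjB mc_sym mc_trans by metis
qed

lemma AD: "mc m (A * Dm) (Cm * A)"
proof -
  have "A * Dm = A * adj B * adj A" unfolding Dm_def Cm_def adj_mult by (simp add: mult.assoc)
  moreover have "mc m (A * adj B * adj A) (A * (- B) * (- A))"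
    by (intro mc_mult mc_multl adjA adjB)
  moreover have "A * (- B) * (- A) = Cm * A" by (simp add: Cm_def)
  ultimately show ?thesis by simp
qed

lemma ACp: "mc m (A * Cm ^ a) (Dm ^ a * A)"
proof (induction a)
  case (Suc a)
  have "A * Cm ^ Suc a = (A * Cm ^ a) * Cm" by (simp only: power_Suc2 mult.assoc)
  moreover have "mc m ((A * Cm ^ a) * Cm) (Dm ^ a * (A * Cm))"
    using mc_multr[OF Suc.IH] by (simp add: mult.assoc)
  moreover have "mc m (Dm ^ a * (A * Cm)) (Dm ^ a * (Dm * A))" by (rule mc_multl[OF AC])
  moreover have "Dm ^ a * (Dm * A) = Dm ^ Suc a * A" by (simp only: power_Suc2 mult.assoc)
  ultimately show ?case using mc_trans by metis
qed simp

lemma ADp: "mc m (A * Dm ^ a) (Cm ^ a * A)"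
proof (induction a)
  case (Suc a)
  have "A * Dm ^ Suc a = (A * Dm ^ a) * Dm" by (simp only: power_Suc2 mult.assoc)
  moreover have "mc m ((A * Dm ^ a) * Dm) (Cm ^ a * (A * Dm))"
    using mc_multr[OF Suc.IH] by (simp add: mult.assoc)
  moreover have "mc m (Cm ^ a * (A * Dm)) (Cm ^ a * (Cm * A))" by (rule mc_multl[OF AD])
  moreover have "Cm ^ a * (Cm * A) = Cm ^ Suc a * A" by (simp only: power_Suc2 mult.assoc)
  ultimately show ?case using mc_trans by metis
qed simp

lemma AP: "mc m (A * (Cm ^ a * Dm ^ b)) (Cm ^ b * Dm ^ a * A)"
proof -
  have 1: "mc m (A * Cm ^ a * Dm ^ b) (Dm ^ a * A * Dm ^ b)" by (rule mc_multr[OF ACp])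
  have 2: "mc m (Dm ^ a * (A * Dm ^ b)) (Dm ^ a * (Cm ^ b * A))" by (rule mc_multl[OF ADp])
  have 3: "Dm ^ a * (Cm ^ b * A) = Cm ^ b * Dm ^ a * A"
    by (simp only: CDcomm mult.assoc[symmetric])
  have 4: "A * (Cm ^ a * Dm ^ b) = A * Cm ^ a * Dm ^ b" "Dm ^ a * A * Dm ^ b = Dm ^ a * (A * Dm ^ b)"
    by (simp_all only: mult.assoc)
  have 5: "mc m (A * (Cm ^ a * Dm ^ b)) (Dm ^ a * (A * Dm ^ b))" using 1 unfolding 4 .
  have 6: "mc m (A * (Cm ^ a * Dm ^ b)) (Dm ^ a * (Cm ^ b * A))" by (rule mc_trans[OF 5 2])
  show ?thesis using 6 unfolding 3 .
qed

definition El :: "nat \<Rightarrow> nat \<Rightarrow> bool \<Rightarrow> bool \<Rightarrow> m2" where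
  "El a b s r = sg s * (Cm ^ a * Dm ^ b) * Ar A r"

definition Qd :: "m2 \<Rightarrow> bool" where "Qd M \<longleftrightarrow> (\<exists>a b s r. mc m M (El a b s r))"

lemma El_mult: "\<exists>a b s r. mc m (El a1 b1 s1 r1 * El a2 b2 s2 r2) (El a b s r)"
proof (cases r1)
  case False
  have "El a1 b1 s1 r1 * El a2 b2 s2 r2 = El (a1 + a2) (b1 + b2) (s1 \<noteq> s2) r2"
    unfolding El_def Ar_def PP[symmetric] using False
    by (cases s1; cases s2) (simp_all add: sg_def mult.assoc)
  then show ?thesis by (metis mc_refl)
next
  case True
  let ?P1 = "Cm ^ a1 * Dm ^ b1" and ?P2 = "Cm ^ a2 * Dm ^ b2"
  have e: "El a1 b1 s1 r1 * El a2 b2 s2 r2 = sg (s1 \<noteq> s2) * ?P1 * ((A * ?P2) * Ar A r2)"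
    unfolding El_def Ar_def using True by (cases s1; cases s2) (simp_all add: sg_def mult.assoc)
  have m0: "mc m (sg (s1 \<noteq> s2) * ?P1 * ((A * ?P2) * Ar A r2))
     (sg (s1 \<noteq> s2) * ?P1 * ((Cm ^ b2 * Dm ^ a2 * A) * Ar A r2))"
    by (intro mc_multl mc_multr AP)
  have e2: "sg (s1 \<noteq> s2) * ?P1 * ((Cm ^ b2 * Dm ^ a2 * A) * Ar A r2)
     = sg (s1 \<noteq> s2) * (Cm ^ (a1 + b2) * Dm ^ (b1 + a2)) * (A * Ar A r2)"
    unfolding PP[symmetric] by (simp only: mult.assoc)
  have m1: "mc m (El a1 b1 s1 r1 * El a2 b2 s2 r2) (sg (s1 \<noteq> s2) * (Cm ^ (a1 + b2) * Dm ^ (b1 + a2)) * (A * Ar A r2))"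
    using m0 unfolding e e2 .
  show ?thesis
  proof (cases r2)
    case False
    then have "sg (s1 \<noteq> s2) * (Cm ^ (a1 + b2) * Dm ^ (b1 + a2)) * (A * Ar A r2) = El (a1+b2) (b1+a2) (s1 \<noteq> s2) True"
      by (simp add: El_def Ar_def)
    then show ?thesis using m1 by metis
  next
    case T2: True
    have m2: "mc m (sg (s1 \<noteq> s2) * (Cm ^ (a1 + b2) * Dm ^ (b1 + a2)) * (A * Ar A r2))
             (sg (s1 \<noteq> s2) * (Cm ^ (a1 + b2) * Dm ^ (b1 + a2)) * (- 1))"
      unfolding Ar_def using T2 mc_multl[OF AA] by simp
    have e3: "sg (s1 \<noteq> s2) * (Cm ^ (a1 + b2) * Dm ^ (b1 + a2)) * (- 1) = El (a1+b2) (b1+a2) (\<not> (s1 \<noteq> s2)) False"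
      by (simp add: El_def Ar_def sg_def)
    have "mc m (El a1 b1 s1 r1 * El a2 b2 s2 r2) (El (a1+b2) (b1+a2) (\<not> (s1 \<noteq> s2)) False)"
      using mc_trans[OF m1 m2] unfolding e3 .
    then show ?thesis by blast
  qed
qed

lemma Qd_closed: "closedQ Qd"
  unfolding closedQ_def
proof (intro conjI allI impI)
  show "Qd 1" unfolding Qd_def by (rule exI[of _ 0], rule exI[of _ 0], rule exI[of _ False], rule exI[of _ False])
      (simp add: El_def sg_def Ar_def)
  fix M N assume "Qd M" "Qd N"
  then obtain a1 b1 s1 r1 a2 b2 s2 r2 where "mc m M (El a1 b1 s1 r1)" "mc m N (El a2 b2 s2 r2)"
    unfolding Qd_def by blast
  then show "Qd (M * N)" unfolding Qd_def using El_mult mc_mult mc_trans by metis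
qed

lemma Qd_A: "Qd A" unfolding Qd_def
  by (rule exI[of _ 0], rule exI[of _ 0], rule exI[of _ False], rule exI[of _ True]) (simp add: El_def sg_def Ar_def)

lemma Qd_adjA: "Qd (adj A)" unfolding Qd_def
  apply (rule exI[of _ 0], rule exI[of _ 0], rule exI[of _ True], rule exI[of _ True])
  using adjA by (simp add: El_def sg_def Ar_def)

lemma B_eq: "B = adj A * Cm" unfolding Cm_def
  by (simp add: mult.assoc[symmetric] adj_mult_self dA)

lemma B_cong: "mc m B (- (Dm * A))"
proof -
  have "mc m (adj A * Cm) (- A * Cm)" by (rule mc_multr[OF adjA])
  moreover have "mc m (- A * Cm) (- (Dm * A))" using mc_neg[OF AC] by simp
  ultimately show ?thesis using B_eq mc_trans by metis
qed

lemma Qd_B: "Qd B" unfolding Qd_def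
  by (rule exI[of _ 0], rule exI[of _ 1], rule exI[of _ True], rule exI[of _ True])
     (use B_cong in \<open>simp add: El_def sg_def Ar_def\<close>)

lemma Qd_adjB: "Qd (adj B)" unfolding Qd_def
proof (rule exI[of _ 0], rule exI[of _ 1], rule exI[of _ False], rule exI[of _ True])
  have "mc m (- B) (Dm * A)" using mc_neg[OF B_cong] by simp
  moreover have "El 0 1 False True = Dm * A" by (simp add: El_def sg_def Ar_def)
  ultimately show "mc m (adj B) (El 0 1 False True)" using adjB mc_trans by metis
qed

lemma Qd_sq: assumes "Qd M" shows "mc m (M * M) (-1) \<or> (\<exists>a b s. mc m M (sg s * (Cm ^ a * Dm ^ b)))"
proof -
  obtain a b s r where h: "mc m M (El a b s r)" using assms Qd_def by blast
  show ?thesis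
  proof (cases r)
    case False then show ?thesis using h by (auto simp: El_def Ar_def)
  next
    case True
    let ?P = "Cm ^ a * Dm ^ b"
    have 1: "mc m (M * M) (El a b s r * El a b s r)" using mc_mult[OF h h] .
    have 2: "El a b s r * El a b s r = (sg s * sg s) * ?P * ((A * ?P) * A)"
      using True by (cases s) (simp_all add: El_def Ar_def sg_def mult.assoc)
    have 3: "mc m ((sg s * sg s) * ?P * ((A * ?P) * A)) ((sg s * sg s) * ?P * ((Cm ^ b * Dm ^ a * A) * A))"
      by (intro mc_multl mc_multr AP)
    have 4: "(sg s * sg s) * ?P * ((Cm ^ b * Dm ^ a * A) * A) = (Cm ^ (a + b) * Dm ^ (b + a)) * (A * A)"
      unfolding PP[symmetric] by (simp add: sg_def mult.assoc)
    have 5: "Cm ^ (a + b) * Dm ^ (b + a) = 1" using CkDk by (simp add: add.commute)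
    have 6: "mc m (1 * (A * A)) (1 * (-1))" by (rule mc_multl[OF AA])
    have "mc m (M * M) (1 * (A * A))" using mc_trans[OF 1 3[folded 2]] unfolding 4 5 .
    then have "mc m (M * M) (-1)" using mc_trans[OF _ 6] by simp
    then show ?thesis by simp
  qed
qed

lemma dih_false: assumes "m \<ge> 3" "genprop A B" shows False
proof -
  have "Qd Um" "Qd V0" using assms(2) Qd_closed Qd_A Qd_adjA Qd_B Qd_adjB unfolding genprop_def by blast+
  have nU: "\<not> mc m (Um * Um) (-1)" using assms(1) by (auto simp: Um_def mc_def one_m2 zdvd_not_zless)
  have nV: "\<not> mc m (V0 * V0) (-1)" using assms(1) by (auto simp: V0_def Sm_def Um_def mc_def one_m2 zdvd_not_zless)
  obtain a b s where u: "mc m Um (sg s * (Cm ^ a * Dm ^ b))" using Qd_sq[OF \<open>Qd Um\<close>] nU by blast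
  obtain a2 b2 s2 where v: "mc m V0 (sg s2 * (Cm ^ a2 * Dm ^ b2))" using Qd_sq[OF \<open>Qd V0\<close>] nV by blast
  have "sg s * (Cm ^ a * Dm ^ b) * (sg s2 * (Cm ^ a2 * Dm ^ b2)) = sg s2 * (Cm ^ a2 * Dm ^ b2) * (sg s * (Cm ^ a * Dm ^ b))"
    by (simp add: sg_def PP add.commute)
  note mc_trans[OF mc_mult[OF u v], unfolded this]
  then have "mc m (Um * V0) (V0 * Um)" using mc_sym[OF mc_mult[OF v u]] by blast
  then show False using assms(1) by (auto simp: Um_def V0_def Sm_def mc_def zdvd_not_zless)
qed

end

lemma trace_pm2:
  assumes "det A = 1" "det B = 1" "tr B = tr A" "genprop A B"
  shows "tr A = 2 \<or> tr A = -2"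
proof (rule ccontr)
  assume n: "\<not> (tr A = 2 \<or> tr A = -2)"
  show False
  proof (cases "odd (tr A)")
    case True then show False using odd_case_false assms by blast
  next
    case False
    define m where "m = (if tr A = 0 then 3 else \<bar>tr A\<bar>)"
    have "m dvd tr A" "m \<ge> 3" using False n by (auto simp: m_def)
    then show False using dih.dih_false[of A B m] assms by (auto simp: dih_def)
  qed
qed

abbreviation "lc \<equiv> (False, Cg)"
abbreviation "lC \<equiv> (True, Cg)"
abbreviation "ld \<equiv> (False, Dg)"
abbreviation "lD \<equiv> (True, Dg)"

abbreviation gm (infixl "\<diamond>" 70) where "x \<diamond> y \<equiv> x \<otimes>\<^bsub>trefoil_group\<^esub> y"
abbreviation gi where "gi x \<equiv> inv\<^bsub>trefoil_group\<^esub> x"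
abbreviation "GC \<equiv> carrier trefoil_group"

interpretation G: group trefoil_group by (rule group_G)

lemma cls_cancel': "cls (u @ l # inv_letter l # v) = cls (u @ v)"
  using word_eq.cancel[of u l v] unfolding cls_eq_iff by simp
lemma cls_rel: "cls (u @ relator @ v) = cls (u @ v)"
  unfolding cls_eq_iff by (rule word_eq.rel)

lemma cls_app: "cls (u @ v) = cls u \<diamond> cls v" by simp

lemma w_ccddd: "cls [lc, lc] = cls [ld, ld, ld]"
proof -
  have "cls [ld, ld, ld] = cls (relator @ [ld, ld, ld])" using cls_rel[of "[]" "[ld,ld,ld]"] by simp
  also have "\<dots> = cls [lc,lc,lD,lD,lD,ld,ld,ld]" by (simp add: relator_def)
  also have "\<dots> = cls [lc,lc,lD,lD,ld,ld]" using cls_cancel'[of "[lc,lc,lD,lD]" lD "[ld,ld]"] by simp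
  also have "\<dots> = cls [lc,lc,lD,ld]" using cls_cancel'[of "[lc,lc,lD]" lD "[ld]"] by simp
  also have "\<dots> = cls [lc,lc]" using cls_cancel'[of "[lc,lc]" lD "[]"] by simp
  finally show ?thesis ..
qed

lemma w_dd: "cls [ld, ld] = cls [lc, lc, lD]"
proof -
  have "cls [lc, lc, lD] = cls [ld, ld, ld] \<diamond> cls [lD]" using w_ccddd cls_app[of "[lc,lc]" "[lD]"] by simp
  also have "\<dots> = cls [ld, ld]" using cls_cancel'[of "[ld,ld]" ld "[]"] by simp
  finally show ?thesis ..
qed

lemma w_DD: "cls [lD, lD] = cls [lC, lC, ld]"
proof -
  have "cls [lC, lC, ld] = cls [lC, lC] \<diamond> cls [ld, ld, ld] \<diamond> cls [lD, lD]"
  proof -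
    have "cls [ld, ld, ld] \<diamond> cls [lD, lD] = cls [ld]"
      using cls_cancel'[of "[ld,ld]" ld "[lD]"] cls_cancel'[of "[ld]" ld "[]"] by simp
    then have "cls [lC, lC] \<diamond> (cls [ld, ld, ld] \<diamond> cls [lD, lD]) = cls [lC, lC] \<diamond> cls [ld]" by simp
    then show ?thesis by (simp add: G.m_assoc)
  qed
  also have "\<dots> = cls [lC, lC, lc, lc, lD, lD]" using w_ccddd[symmetric] by simp
  also have "\<dots> = cls [lD, lD]"
    using cls_cancel'[of "[lC]" lC "[lc, lD, lD]"] cls_cancel'[of "[]" lC "[lD, lD]"] by simp
  finally show ?thesis ..
qed

lemma w_C: "cls [lC] = cls [lC, lC, lc]"
  using cls_cancel'[of "[lC]" lC "[]"] by simp

definition zz :: "word set" where "zz = cls [lc, lc]"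

lemma zz_letter: "zz \<diamond> cls [l] = cls [l] \<diamond> zz"
proof (cases l)
  case (Pair b g)
  show ?thesis
  proof (cases b; cases g)
    assume "b" "g = Cg"
    then show ?thesis using Pair cls_cancel'[of "[lc]" lc "[]"] cls_cancel'[of "[]" lC "[lc]"]
      by (simp add: zz_def)
  next
    assume "\<not> b" "g = Cg" then show ?thesis using Pair by (simp add: zz_def)
  next
    assume "b" "g = Dg"
    have "zz \<diamond> cls [lD] = cls [ld, ld]" unfolding zz_def w_ccddd
      using cls_cancel'[of "[ld,ld]" ld "[]"] by simp
    moreover have "cls [lD] \<diamond> zz = cls [ld, ld]" unfolding zz_def w_ccddd
      using cls_cancel'[of "[]" lD "[ld,ld]"] by simp
    ultimately show ?thesis using Pair \<open>b\<close> \<open>g = Dg\<close> by simp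
  next
    assume "\<not> b" "g = Dg"
    have "zz \<diamond> cls [ld] = cls [ld,ld,ld,ld]" unfolding zz_def w_ccddd by simp
    moreover have "cls [ld] \<diamond> zz = cls [ld,ld,ld,ld]" unfolding zz_def w_ccddd by simp
    ultimately show ?thesis using Pair \<open>\<not> b\<close> \<open>g = Dg\<close> by simp
  qed
qed

lemma zz_word: "zz \<diamond> cls w = cls w \<diamond> zz"
proof (induction w)
  case Nil then show ?case by (simp add: zz_def)
next
  case (Cons l w)
  have "zz \<diamond> cls (l # w) = (zz \<diamond> cls [l]) \<diamond> cls w" using cls_app[of "[l]" w]
    by (simp add: zz_def)
  also have "\<dots> = cls [l] \<diamond> (zz \<diamond> cls w)" unfolding zz_letter by (simp add: zz_def)
  also have "\<dots> = cls (l # w) \<diamond> zz" unfolding Cons by (simp add: zz_def)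
  finally show ?case .
qed

lemma zz_central: "x \<in> GC \<Longrightarrow> zz \<diamond> x = x \<diamond> zz"
  using zz_word carrier_G by auto

lemma zz_in[simp]: "zz \<in> GC" by (simp add: zz_def)


abbreviation "PS \<equiv> peripheral_subgroup"

lemma gen_c_cls: "gen_c = cls [lc]" by (simp add: gen_c_def cls_def)
lemma gen_d_cls: "gen_d = cls [ld]" by (simp add: gen_d_def cls_def)
lemma meridian_cls: "meridian = cls [lD, lc]"
  by (simp add: meridian_def gen_c_cls gen_d_cls inv_cls iw_def)

lemma PS_subgroup: "subgroup PS trefoil_group"
  unfolding peripheral_subgroup_def
  by (rule G.generate_is_subgroup) (auto simp: meridian_cls longitude_def gen_c_cls)

lemma mer_in: "meridian \<in> PS" unfolding peripheral_subgroup_def by (rule generate.incl) simp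
lemma lon_in: "longitude \<in> PS" unfolding peripheral_subgroup_def by (rule generate.incl) simp

lemma PS_pow: "x \<in> PS \<Longrightarrow> x [^]\<^bsub>trefoil_group\<^esub> (n::nat) \<in> PS"
proof (induction n)
  case 0 then show ?case using PS_subgroup subgroup.one_closed by fastforce
next
  case (Suc n) then show ?case using PS_subgroup subgroup.m_closed by fastforce
qed

lemma zz_PS: "zz \<in> PS"
proof -
  have mc: "meridian [^]\<^bsub>trefoil_group\<^esub> (6::nat) \<in> GC" by (simp add: meridian_cls)
  have cc: "gen_c [^]\<^bsub>trefoil_group\<^esub> (2::nat) = zz"
    by (simp add: gen_c_cls zz_def numeral_2_eq_2)
  have "longitude \<diamond> meridian [^]\<^bsub>trefoil_group\<^esub> (6::nat) = zz"
  proof -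
    have c2: "gen_c [^]\<^bsub>trefoil_group\<^esub> (2::nat) \<in> GC" by (simp add: cc)
    have "longitude \<diamond> meridian [^]\<^bsub>trefoil_group\<^esub> (6::nat)
      = gen_c [^]\<^bsub>trefoil_group\<^esub> (2::nat) \<diamond> (gi (meridian [^]\<^bsub>trefoil_group\<^esub> (6::nat)) \<diamond> meridian [^]\<^bsub>trefoil_group\<^esub> (6::nat))"
      unfolding longitude_def by (rule G.m_assoc[OF c2 G.inv_closed[OF mc] mc])
    also have "\<dots> = gen_c [^]\<^bsub>trefoil_group\<^esub> (2::nat)" by (simp only: G.l_inv[OF mc] G.r_one[OF c2])
    finally show ?thesis using cc by simp
  qed
  moreover have "longitude \<diamond> meridian [^]\<^bsub>trefoil_group\<^esub> (6::nat) \<in> PS"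
    by (rule subgroup.m_closed[OF PS_subgroup lon_in PS_pow[OF mer_in]])
  ultimately show ?thesis by simp
qed

definition Zc :: "word set set" where
  "Zc = {p \<in> GC. (\<forall>x\<in>GC. p \<diamond> x = x \<diamond> p) \<and> p \<in> PS \<and> (Phi p = 1 \<or> Phi p = -1)}"

lemma Zc_carr: "p \<in> Zc \<Longrightarrow> p \<in> GC" by (simp add: Zc_def)
lemma Zc_comm: "p \<in> Zc \<Longrightarrow> x \<in> GC \<Longrightarrow> p \<diamond> x = x \<diamond> p" by (simp add: Zc_def)

lemma Zc_one: "\<one>\<^bsub>trefoil_group\<^esub> \<in> Zc"
  unfolding Zc_def using PS_subgroup subgroup.one_closed by (auto simp: Phi_one)

lemma Phi_zz: "Phi zz = -1" by (simp add: zz_def Sm_def one_m2)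

lemma zz_Zc: "zz \<in> Zc" unfolding Zc_def using zz_central zz_PS Phi_zz by auto

lemma izz_Zc: "gi zz \<in> Zc"
proof -
  have "gi zz \<diamond> x = x \<diamond> gi zz" if "x \<in> GC" for x
  proof -
    have "gi zz \<diamond> x = gi zz \<diamond> x \<diamond> zz \<diamond> gi zz" using that by (simp add: G.m_assoc)
    also have "\<dots> = gi zz \<diamond> (zz \<diamond> x) \<diamond> gi zz" using that zz_central by (simp add: G.m_assoc)
    also have "\<dots> = x \<diamond> gi zz" using that by (simp add: G.m_assoc[symmetric])
    finally show ?thesis .
  qed
  moreover have "gi zz \<in> PS" by (rule subgroup.m_inv_closed[OF PS_subgroup zz_PS])
  moreover have "Phi (gi zz) = -1" by (simp add: Phi_inv Phi_zz one_m2)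
  ultimately show ?thesis unfolding Zc_def by auto
qed

lemma Zc_mult: "p \<in> Zc \<Longrightarrow> q \<in> Zc \<Longrightarrow> p \<diamond> q \<in> Zc"
proof -
  assume p: "p \<in> Zc" and q: "q \<in> Zc"
  have "(p \<diamond> q) \<diamond> x = x \<diamond> (p \<diamond> q)" if "x \<in> GC" for x
  proof -
    have pc: "p \<in> GC" "q \<in> GC" using p q Zc_carr by auto
    have "(p \<diamond> q) \<diamond> x = p \<diamond> (q \<diamond> x)" using pc that by (simp add: G.m_assoc)
    also have "\<dots> = p \<diamond> (x \<diamond> q)" using Zc_comm[OF q that] by simp
    also have "\<dots> = (p \<diamond> x) \<diamond> q" using pc that by (simp add: G.m_assoc)
    also have "\<dots> = (x \<diamond> p) \<diamond> q" using Zc_comm[OF p that] by simp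
    also have "\<dots> = x \<diamond> (p \<diamond> q)" using pc that by (simp add: G.m_assoc)
    finally show ?thesis .
  qed
  moreover have "p \<diamond> q \<in> PS"
  proof -
    have "p \<in> PS" "q \<in> PS" using p q unfolding Zc_def by blast+
    then show ?thesis by (rule subgroup.m_closed[OF PS_subgroup])
  qed
  moreover have "Phi (p \<diamond> q) = 1 \<or> Phi (p \<diamond> q) = -1"
  proof -
    have "Phi p = 1 \<or> Phi p = -1" "Phi q = 1 \<or> Phi q = -1" using p q unfolding Zc_def by blast+
    then show ?thesis using Phi_mult[OF Zc_carr[OF p] Zc_carr[OF q]] by auto
  qed
  moreover have "p \<diamond> q \<in> GC" using G.m_closed[OF Zc_carr[OF p] Zc_carr[OF q]] .
  ultimately show ?thesis unfolding Zc_def by blast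
qed


lemma Zc_PS: "p \<in> Zc \<Longrightarrow> p \<in> PS" unfolding Zc_def by blast
lemma Zc_Phi: "p \<in> Zc \<Longrightarrow> Phi p = 1 \<or> Phi p = -1" unfolding Zc_def by blast

definition dl :: "bool \<Rightarrow> letter" where "dl e = (if e then ld else lD)"
definition Ww :: "bool list \<Rightarrow> word" where "Ww es = concat (map (\<lambda>e. [lc, dl e]) es)"
fun fw :: "bool option \<Rightarrow> word" where "fw None = []" | "fw (Some e) = [dl e]"
definition nfw :: "bool option \<Rightarrow> bool list \<Rightarrow> bool \<Rightarrow> word" where
  "nfw f es b = fw f @ Ww es @ (if b then [lc] else [])"

lemma Ww_Nil[simp]: "Ww [] = []" by (simp add: Ww_def)
lemma Ww_Cons[simp]: "Ww (e # es) = lc # dl e # Ww es" by (simp add: Ww_def)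
lemma Ww_snoc[simp]: "Ww (es @ [e]) = Ww es @ [lc, dl e]" by (simp add: Ww_def)

definition NFP :: "word set \<Rightarrow> bool" where
  "NFP g \<longleftrightarrow> (\<exists>p\<in>Zc. \<exists>f es b. g = p \<diamond> cls (nfw f es b))"

lemma NFP_zc: "p \<in> Zc \<Longrightarrow> NFP g \<Longrightarrow> NFP (p \<diamond> g)"
proof -
  assume p: "p \<in> Zc" and "NFP g"
  then obtain q f es b where q: "q \<in> Zc" and g: "g = q \<diamond> cls (nfw f es b)" unfolding NFP_def by blast
  have "p \<diamond> g = (p \<diamond> q) \<diamond> cls (nfw f es b)" using g Zc_carr[OF p] Zc_carr[OF q] by (simp add: G.m_assoc)
  then show ?thesis unfolding NFP_def using Zc_mult[OF p q] by blast
qed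

lemma NFP_nf: "NFP (cls (nfw f es b))"
  unfolding NFP_def using Zc_one by (intro bexI[of _ "\<one>\<^bsub>trefoil_group\<^esub>"]) auto

lemma izz_cls: "gi zz = cls [lC, lC]" by (simp add: zz_def inv_cls iw_def)

lemma step_c: "NFP (cls (lc # nfw f es b))"
proof (cases f)
  case (Some e)
  then have "lc # nfw f es b = nfw None (e # es) b" by (simp add: nfw_def)
  then show ?thesis using NFP_nf by metis
next
  case None
  show ?thesis
  proof (cases es)
    case Nil
    show ?thesis
    proof (cases b)
      case True
      then have "cls (lc # nfw f es b) = zz \<diamond> cls (nfw None [] False)" using None Nil by (simp add: nfw_def zz_def)
      then show ?thesis using NFP_zc[OF zz_Zc NFP_nf] by metis
    next
      case False
      then have "lc # nfw f es b = nfw None [] True" using None Nil by (simp add: nfw_def)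
      then show ?thesis using NFP_nf by metis
    qed
  next
    case (Cons e es')
    then have "cls (lc # nfw f es b) = zz \<diamond> cls (nfw (Some e) es' b)" using None by (simp add: nfw_def zz_def)
    then show ?thesis using NFP_zc[OF zz_Zc NFP_nf] by metis
  qed
qed

lemma step: "NFP (cls (l # nfw f es b))"
proof (cases l)
  case (Pair bb gg)
  show ?thesis
  proof (cases bb; cases gg)
    assume "\<not> bb" "gg = Cg" then show ?thesis using Pair step_c by simp
  next
    assume "bb" "gg = Cg"
    then have "cls (l # nfw f es b) = gi zz \<diamond> cls (lc # nfw f es b)"
      using Pair w_C cls_app[of "[lC]" "nfw f es b"] by (simp add: izz_cls)
    then show ?thesis using NFP_zc[OF izz_Zc step_c] by metis
  next
    assume "\<not> bb" "gg = Dg"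
    then have l: "l = ld" using Pair by simp
    show ?thesis
    proof (cases f)
      case None
      then have "l # nfw f es b = nfw (Some True) es b" using l by (simp add: nfw_def dl_def)
      then show ?thesis using NFP_nf by metis
    next
      case (Some e)
      show ?thesis
      proof (cases e)
        case True
        have "cls (l # nfw f es b) = cls [ld, ld] \<diamond> cls (Ww es @ (if b then [lc] else []))"
          using l Some True by (simp add: nfw_def dl_def)
        also have "\<dots> = zz \<diamond> cls (nfw (Some False) es b)" unfolding w_dd by (simp add: nfw_def dl_def zz_def)
        finally show ?thesis using NFP_zc[OF zz_Zc NFP_nf] by metis
      next
        case False
        have "cls (l # nfw f es b) = cls ([] @ ld # inv_letter ld # (Ww es @ (if b then [lc] else [])))"
          using l Some False by (simp add: nfw_def dl_def)
        also have "\<dots> = cls (nfw None es b)" unfolding cls_cancel' by (simp add: nfw_def)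
        finally show ?thesis using NFP_nf by metis
      qed
    qed
  next
    assume "bb" "gg = Dg"
    then have l: "l = lD" using Pair by simp
    show ?thesis
    proof (cases f)
      case None
      then have "l # nfw f es b = nfw (Some False) es b" using l by (simp add: nfw_def dl_def)
      then show ?thesis using NFP_nf by metis
    next
      case (Some e)
      show ?thesis
      proof (cases e)
        case False
        have "cls (l # nfw f es b) = cls [lD, lD] \<diamond> cls (Ww es @ (if b then [lc] else []))"
          using l Some False by (simp add: nfw_def dl_def)
        also have "\<dots> = gi zz \<diamond> cls (nfw (Some True) es b)" unfolding w_DD by (simp add: nfw_def dl_def izz_cls)
        finally show ?thesis using NFP_zc[OF izz_Zc NFP_nf] by metis
      next
        case True
        have "cls (l # nfw f es b) = cls ([] @ lD # inv_letter lD # (Ww es @ (if b then [lc] else [])))"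
          using l Some True by (simp add: nfw_def dl_def)
        also have "\<dots> = cls (nfw None es b)" unfolding cls_cancel' by (simp add: nfw_def)
        finally show ?thesis using NFP_nf by metis
      qed
    qed
  qed
qed

lemma NFP_all: "NFP (cls w)"
proof (induction w)
  case Nil
  have "[] = nfw None [] False" by (simp add: nfw_def)
  then show ?case using NFP_nf by metis
next
  case (Cons l w)
  then obtain p f es b where p: "p \<in> Zc" and e: "cls w = p \<diamond> cls (nfw f es b)" unfolding NFP_def by blast
  have "cls (l # w) = cls [l] \<diamond> cls w" by simp
  also have "\<dots> = p \<diamond> cls (l # nfw f es b)"
  proof -
    have pc: "p \<in> GC" by (rule Zc_carr[OF p])
    have "cls [l] \<diamond> (p \<diamond> cls (nfw f es b)) = (cls [l] \<diamond> p) \<diamond> cls (nfw f es b)"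
      using pc by (simp add: G.m_assoc)
    also have "\<dots> = (p \<diamond> cls [l]) \<diamond> cls (nfw f es b)" using Zc_comm[OF p, of "cls [l]"] by simp
    also have "\<dots> = p \<diamond> cls (l # nfw f es b)" using pc by (simp add: G.m_assoc)
    finally show ?thesis unfolding e .
  qed
  finally show ?case using NFP_zc[OF p step] by metis
qed


definition CN :: "word \<Rightarrow> bool" where
  "CN k \<longleftrightarrow> k = [lc] \<or> k = [ld] \<or> k = [lD] \<or> (\<exists>es. k = Ww es)"

definition RP :: "word set \<Rightarrow> bool" where
  "RP g \<longleftrightarrow> (\<exists>x\<in>GC. \<exists>q\<in>Zc. \<exists>k. CN k \<and> x \<diamond> g \<diamond> gi x = q \<diamond> cls k)"

lemma RP_CN: "CN k \<Longrightarrow> RP (cls k)"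
  unfolding RP_def using Zc_one
  by (intro bexI[of _ "\<one>\<^bsub>trefoil_group\<^esub>"]) auto

lemma RP_conj: assumes g: "g \<in> GC" and y: "y \<in> GC" and r: "RP (y \<diamond> g \<diamond> gi y)" shows "RP g"
proof -
  obtain x q k where x: "x \<in> GC" and q: "q \<in> Zc" and k: "CN k"
    and e: "x \<diamond> (y \<diamond> g \<diamond> gi y) \<diamond> gi x = q \<diamond> cls k" using r unfolding RP_def by blast
  have "(x \<diamond> y) \<diamond> g \<diamond> gi (x \<diamond> y) = x \<diamond> (y \<diamond> g \<diamond> gi y) \<diamond> gi x"
    using x y g by (simp add: G.inv_mult_group G.m_assoc)
  then have "(x \<diamond> y) \<diamond> g \<diamond> gi (x \<diamond> y) = q \<diamond> cls k" using e by simp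
  then show ?thesis unfolding RP_def using G.m_closed[OF x y] q k by blast
qed

lemma cls_iw_left: "cls (iw u @ u @ w) = cls w"
  unfolding cls_eq_iff using E_append_right[OF iw_cancel[of u], of w] by simp

lemma iw_iw[simp]: "iw (iw u) = u" by (simp add: iw_def rev_map[symmetric] comp_def)

lemma RP_rot: "RP (cls (v @ u)) \<Longrightarrow> RP (cls (u @ v))"
proof -
  assume r: "RP (cls (v @ u))"
  have "cls (iw u) \<diamond> cls (u @ v) \<diamond> gi (cls (iw u)) = cls (iw u @ u @ v @ u)"
    by (simp add: inv_cls)
  also have "\<dots> = cls (v @ u)" using cls_iw_left[of u "v @ u"] by simp
  finally show ?thesis using RP_conj[of "cls (u @ v)" "cls (iw u)"] r by simp
qed

lemma RP_zc: assumes p: "p \<in> Zc" and g: "g \<in> GC" and r: "RP g" shows "RP (p \<diamond> g)"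
proof -
  obtain x q k where x: "x \<in> GC" and q: "q \<in> Zc" and k: "CN k"
    and e: "x \<diamond> g \<diamond> gi x = q \<diamond> cls k" using r unfolding RP_def by blast
  have pc: "p \<in> GC" using Zc_carr[OF p] .
  have "x \<diamond> (p \<diamond> g) \<diamond> gi x = (x \<diamond> p) \<diamond> g \<diamond> gi x" using x pc g by (simp add: G.m_assoc)
  also have "\<dots> = (p \<diamond> x) \<diamond> g \<diamond> gi x" using Zc_comm[OF p x] by simp
  also have "\<dots> = p \<diamond> (x \<diamond> g \<diamond> gi x)" using x pc g by (simp add: G.m_assoc)
  also have "\<dots> = (p \<diamond> q) \<diamond> cls k" unfolding e using pc Zc_carr[OF q] by (simp add: G.m_assoc)
  finally show ?thesis unfolding RP_def using x k Zc_mult[OF p q] by blast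
qed

lemma dl_inv: "e' \<noteq> e \<Longrightarrow> dl e' = inv_letter (dl e)" by (cases e; cases e') (auto simp: dl_def)

lemma CR: "RP (cls (nfw f es b))"
proof (induction "length es" arbitrary: f es b rule: less_induct)
  case less
  show ?case
  proof (cases b)
    case True
    show ?thesis
    proof (cases f)
      case (Some e)
      have "nfw f es b = [dl e] @ (Ww es @ [lc])" using Some True by (simp add: nfw_def)
      moreover have "(Ww es @ [lc]) @ [dl e] = Ww (es @ [e])" by simp
      ultimately show ?thesis using RP_rot RP_CN CN_def by metis
    next
      case None
      show ?thesis
      proof (cases es)
        case Nil
        then show ?thesis using None True RP_CN by (simp add: CN_def nfw_def)
      next
        case (Cons e es')
        have "nfw f es b = (lc # dl e # Ww es') @ [lc]" using None True Cons by (simp add: nfw_def)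
        moreover have "cls ([lc] @ (lc # dl e # Ww es')) = zz \<diamond> cls (nfw (Some e) es' False)"
          by (simp add: nfw_def zz_def)
        moreover have "RP (zz \<diamond> cls (nfw (Some e) es' False))"
          using RP_zc[OF zz_Zc] less Cons by simp
        ultimately show ?thesis using RP_rot by metis
      qed
    qed
  next
    case False
    show ?thesis
    proof (cases f)
      case None
      then show ?thesis using False RP_CN by (auto simp: CN_def nfw_def)
    next
      case (Some e)
      show ?thesis
      proof (cases es rule: rev_cases)
        case Nil
        then show ?thesis using Some False RP_CN by (auto simp: CN_def nfw_def dl_def)
      next
        case (snoc es' e')
        have sh: "length es' < length es" using snoc by simp
        have "nfw f es b = ([dl e] @ Ww es' @ [lc]) @ [dl e']" using Some False snoc by (simp add: nfw_def)
        moreover have "RP (cls ([dl e'] @ ([dl e] @ Ww es' @ [lc])))"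
        proof (cases "e' = e")
          case False
          have "cls ([dl e'] @ ([dl e] @ Ww es' @ [lc])) = cls ([] @ inv_letter (dl e) # dl e # (Ww es' @ [lc]))"
            using dl_inv[OF False] by simp
          also have "\<dots> = cls (nfw None es' True)"
            using cls_cancel'[of "[]" "inv_letter (dl e)" "Ww es' @ [lc]"] by (simp add: nfw_def)
          finally show ?thesis using less sh by simp
        next
          case True
          show ?thesis
          proof (cases e)
            case True
            have "cls ([dl e'] @ ([dl e] @ Ww es' @ [lc])) = cls [ld, ld] \<diamond> cls (Ww es' @ [lc])"
              using True \<open>e' = e\<close> by (simp add: dl_def)
            also have "\<dots> = zz \<diamond> cls (nfw (Some False) es' True)" unfolding w_dd
              by (simp add: zz_def nfw_def dl_def)
            finally show ?thesis using RP_zc[OF zz_Zc] less sh by simp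
          next
            case False
            have "cls ([dl e'] @ ([dl e] @ Ww es' @ [lc])) = cls [lD, lD] \<diamond> cls (Ww es' @ [lc])"
              using False \<open>e' = e\<close> by (simp add: dl_def)
            also have "\<dots> = gi zz \<diamond> cls (nfw (Some True) es' True)" unfolding w_DD
              by (simp add: izz_cls nfw_def dl_def)
            finally show ?thesis using RP_zc[OF izz_Zc] less sh by simp
          qed
        qed
        ultimately show ?thesis using RP_rot by metis
      qed
    qed
  qed
qed

lemma RP_all: "g \<in> GC \<Longrightarrow> RP g"
proof -
  assume "g \<in> GC"
  then obtain w where "g = cls w" by (auto simp: carrier_G)
  then obtain p f es b where p: "p \<in> Zc" and e: "g = p \<diamond> cls (nfw f es b)" using NFP_all unfolding NFP_def by blast
  show ?thesis unfolding e by (rule RP_zc[OF p cls_in CR])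
qed


definition Tm :: m2 where "Tm = M2 1 1 0 1"
definition Lm :: m2 where "Lm = M2 1 0 1 1"
definition tl :: "bool \<Rightarrow> m2" where "tl e = (if e then Tm else Lm)"
definition prodT :: "bool list \<Rightarrow> m2" where "prodT es = foldr (\<lambda>e M. tl e * M) es 1"

lemma prodT_Nil[simp]: "prodT [] = 1" by (simp add: prodT_def)
lemma prodT_Cons[simp]: "prodT (e # es) = tl e * prodT es" by (simp add: prodT_def)
lemma prodT_append: "prodT (xs @ ys) = prodT xs * prodT ys"
  by (induction xs) (auto simp: mult.assoc)

lemma phiw_Ww: "phiw (Ww es) = prodT es \<or> phiw (Ww es) = - prodT es"
proof (induction es)
  case Nil then show ?case by simp
next
  case (Cons e es)
  have h: "phil lc * phil (dl e) = (if e then - Tm else Lm)"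
    by (cases e) (auto simp: dl_def Sm_def Um_def Tm_def Lm_def)
  have "phiw (Ww (e # es)) = (phil lc * phil (dl e)) * phiw (Ww es)" by (simp add: mult.assoc)
  then show ?case using Cons h by (cases e) (auto simp: tl_def)
qed

fun NN :: "m2 \<Rightarrow> bool" where "NN (M2 a b p d) = (a \<ge> 1 \<and> b \<ge> 0 \<and> p \<ge> 0 \<and> d \<ge> 1)"
fun le2 :: "m2 \<Rightarrow> m2 \<Rightarrow> bool" where
  "le2 (M2 a b p d) (M2 a2 b2 p2 d2) = (a \<le> a2 \<and> b \<le> b2 \<and> p \<le> p2 \<and> d \<le> d2)"

lemma ge1_mult: "(a::int) \<ge> 1 \<Longrightarrow> b \<ge> 1 \<Longrightarrow> a * b \<ge> 1"
  using mult_mono[of 1 a 1 b] by simp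

lemma NN_mult: "NN M \<Longrightarrow> NN N \<Longrightarrow> NN (M * N)"
proof (cases M; cases N)
  fix a b p d a2 b2 p2 d2
  assume "NN M" "NN N" "M = M2 a b p d" "N = M2 a2 b2 p2 d2"
  then have h: "a \<ge> 1" "b \<ge> 0" "p \<ge> 0" "d \<ge> 1" "a2 \<ge> 1" "b2 \<ge> 0" "p2 \<ge> 0" "d2 \<ge> 1" by auto
  have "a * a2 \<ge> 1" "d * d2 \<ge> 1" using h ge1_mult by auto
  moreover have "b * p2 \<ge> 0" "p * b2 \<ge> 0" "a * b2 \<ge> 0" "b * d2 \<ge> 0" "p * a2 \<ge> 0" "d * p2 \<ge> 0"
    using h by auto
  ultimately show "NN (M * N)" using \<open>M = M2 a b p d\<close> \<open>N = M2 a2 b2 p2 d2\<close> by simp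
qed
lemma NN_tl: "NN (tl e)" by (simp add: tl_def Tm_def Lm_def)
lemma NN_prodT: "NN (prodT es)" by (induction es) (auto intro: NN_mult NN_tl simp: one_m2)

lemma le2_left: "NN M \<Longrightarrow> NN N \<Longrightarrow> le2 N (M * N)"
proof (cases M; cases N)
  fix a b p d a2 b2 p2 d2
  assume "NN M" "NN N" "M = M2 a b p d" "N = M2 a2 b2 p2 d2"
  then show "le2 N (M * N)"
    by simp (smt (verit) mult_le_cancel_right1 mult_nonneg_nonneg mult_left_mono)
qed

lemma le2_right: "NN M \<Longrightarrow> NN N \<Longrightarrow> le2 M (M * N)"
proof (cases M; cases N)
  fix a b p d a2 b2 p2 d2
  assume "NN M" "NN N" "M = M2 a b p d" "N = M2 a2 b2 p2 d2"
  then show "le2 M (M * N)"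
    by simp (smt (verit) mult_le_cancel_left1 mult_nonneg_nonneg mult_right_mono)
qed

lemma le2_mono_r: "le2 M M' \<Longrightarrow> NN M \<Longrightarrow> NN N \<Longrightarrow> le2 (M * N) (M' * N)"
proof (cases M; cases M'; cases N)
  fix a b p d a1 b1 p1 d1 a2 b2 p2 d2
  assume "le2 M M'" "NN M" "NN N" "M = M2 a b p d" "M' = M2 a1 b1 p1 d1" "N = M2 a2 b2 p2 d2"
  then show "le2 (M * N) (M' * N)"
    by simp (smt (verit) mult_right_mono)
qed

lemma le2_tr: "le2 M N \<Longrightarrow> tr M \<le> tr N" by (cases M; cases N) auto

lemma tr_mixed: "tr (prodT (xs @ [e] @ ys @ [\<not> e] @ zs)) \<ge> 3"
proof -
  let ?X = "prodT xs" and ?Y = "prodT ys" and ?Z = "prodT zs"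
  let ?M = "tl e * ?Y * tl (\<not> e)"
  have 1: "prodT (xs @ [e] @ ys @ [\<not> e] @ zs) = ?X * (?M * ?Z)"
    by (simp add: prodT_append mult.assoc)
  have 2: "tr (?X * (?M * ?Z)) = tr ((?M * ?Z) * ?X)" by (rule tr_comm)
  have 3: "(?M * ?Z) * ?X = ?M * (?Z * ?X)" by (simp only: mult.assoc)
  have 4: "tr (?M * (?Z * ?X)) = tr ((?Z * ?X) * ?M)" by (rule tr_comm)
  have a: "le2 ?M ((?Z * ?X) * ?M)"
    by (intro le2_left NN_mult NN_prodT NN_tl)
  have b: "le2 (tl e * tl (\<not> e)) ?M"
    by (intro le2_mono_r le2_right NN_prodT NN_tl)
  have c: "tr (tl e * tl (\<not> e)) = 3" by (cases e) (simp_all add: tl_def Tm_def Lm_def)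
  have "tr (tl e * tl (\<not> e)) \<le> tr ((?Z * ?X) * ?M)" using le2_tr[OF a] le2_tr[OF b] by linarith
  then show ?thesis unfolding 1 2 3 4 c .
qed

lemma split_mixed: "True \<in> set es \<Longrightarrow> False \<in> set es \<Longrightarrow> \<exists>xs e ys zs. es = xs @ [e] @ ys @ [\<not> e] @ zs"
proof -
  assume t: "True \<in> set es" and f: "False \<in> set es"
  obtain xs rest where es: "es = xs @ True # rest" using split_list[OF t] by blast
  show ?thesis
  proof (cases "False \<in> set xs")
    case True
    then obtain a b where "xs = a @ False # b" using split_list by metis
    then have "es = a @ [False] @ b @ [\<not> False] @ rest" using es by simp
    then show ?thesis by blast
  next
    case False
    then have "False \<in> set rest" using f es by auto
    then obtain a b where "rest = a @ False # b" using split_list by metis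
    then have "es = xs @ [True] @ a @ [\<not> True] @ b" using es by simp
    then show ?thesis by blast
  qed
qed

lemma tr_Ww_mixed: "True \<in> set es \<Longrightarrow> False \<in> set es \<Longrightarrow> tr (phiw (Ww es)) \<noteq> 2 \<and> tr (phiw (Ww es)) \<noteq> -2"
proof -
  assume "True \<in> set es" "False \<in> set es"
  then obtain xs e ys zs where "es = xs @ [e] @ ys @ [\<not> e] @ zs" using split_mixed by blast
  then have t: "tr (prodT es) \<ge> 3" using tr_mixed by simp
  show ?thesis using phiw_Ww[of es]
  proof
    assume "phiw (Ww es) = prodT es" then show ?thesis using t by simp
  next
    assume "phiw (Ww es) = - prodT es" then show ?thesis using t by simp
  qed
qed


lemma cd_PS: "cls [lc, ld] \<in> PS"
proof -
  have "zz \<diamond> gi meridian = cls [lc, ld]"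
    unfolding meridian_cls inv_cls using cls_cancel'[of "[lc]" lc "[ld]"] by (simp add: zz_def iw_def)
  moreover have "zz \<diamond> gi meridian \<in> PS"
    by (rule subgroup.m_closed[OF PS_subgroup zz_PS subgroup.m_inv_closed[OF PS_subgroup mer_in]])
  ultimately show ?thesis by simp
qed

lemma Ww_true_PS: "False \<notin> set es \<Longrightarrow> cls (Ww es) \<in> PS"
proof (induction es)
  case Nil then show ?case using subgroup.one_closed[OF PS_subgroup] by (simp add: one_cls)
next
  case (Cons e es)
  then have e: "e" and r: "cls (Ww es) \<in> PS" by auto
  have "cls (Ww (e # es)) = cls [lc, ld] \<diamond> cls (Ww es)" using e by (simp add: dl_def)
  then show ?case using subgroup.m_closed[OF PS_subgroup cd_PS r] by simp
qed

definition Vw :: "bool list \<Rightarrow> word" where "Vw es = concat (map (\<lambda>_. [lD, lc]) es)"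

lemma Vw_PS: "cls (Vw es) \<in> PS"
proof (induction es)
  case Nil then show ?case using subgroup.one_closed[OF PS_subgroup] by (simp add: one_cls Vw_def)
next
  case (Cons e es)
  have "cls (Vw (e # es)) = meridian \<diamond> cls (Vw es)" by (simp add: Vw_def meridian_cls)
  then show ?case using subgroup.m_closed[OF PS_subgroup mer_in Cons] by simp
qed

lemma Ww_false: "True \<notin> set es \<Longrightarrow> cls (Ww es) = cls [lc] \<diamond> cls (Vw es) \<diamond> cls [lC]"
proof (induction es)
  case Nil then show ?case using cls_cancel'[of "[]" lc "[]"] by (simp add: Vw_def)
next
  case (Cons e es)
  then have e: "\<not> e" and r: "cls (Ww es) = cls [lc] \<diamond> cls (Vw es) \<diamond> cls [lC]" by auto
  have "cls (Ww (e # es)) = cls [lc, lD] \<diamond> cls (Ww es)" using e by (simp add: dl_def)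
  also have "\<dots> = cls [lc] \<diamond> cls (Vw (e # es)) \<diamond> cls [lC]" unfolding r by (simp add: Vw_def)
  finally show ?case .
qed

lemma periph_conj: assumes "peripheral h" "x \<in> GC" shows "peripheral (x \<diamond> h \<diamond> gi x)"
proof -
  obtain w p where w: "w \<in> GC" and p: "p \<in> PS" and h: "h = w \<diamond> p \<diamond> gi w"
    using assms(1) unfolding peripheral_def by blast
  have pc: "p \<in> GC" using p subgroup.mem_carrier[OF PS_subgroup] by blast
  have "x \<diamond> h \<diamond> gi x = (x \<diamond> w) \<diamond> p \<diamond> gi (x \<diamond> w)"
    unfolding h using w pc assms(2) by (simp add: G.inv_mult_group G.m_assoc)
  then show ?thesis unfolding peripheral_def using G.m_closed[OF assms(2) w] p by blast
qed

lemma periph_back: assumes "peripheral (y \<diamond> h \<diamond> gi y)" "y \<in> GC" "h \<in> GC" shows "peripheral h"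
proof -
  have "gi y \<diamond> (y \<diamond> h \<diamond> gi y) \<diamond> gi (gi y) = h" using assms(2,3)
    by (simp add: G.m_assoc[symmetric]) (simp add: G.m_assoc)
  then show ?thesis using periph_conj[OF assms(1) G.inv_closed[OF assms(2)]] by simp
qed

lemma periph_PS: "p \<in> PS \<Longrightarrow> peripheral p"
proof -
  assume p: "p \<in> PS"
  have pc: "p \<in> GC" using p subgroup.mem_carrier[OF PS_subgroup] by blast
  have "p = \<one>\<^bsub>trefoil_group\<^esub> \<diamond> p \<diamond> gi \<one>\<^bsub>trefoil_group\<^esub>" using pc by simp
  then show ?thesis unfolding peripheral_def using p G.one_closed by blast
qed

lemma tr_pm: "Mq = 1 \<or> Mq = -1 \<Longrightarrow> tr (Mq * N) = tr N \<or> tr (Mq * N) = - tr N" by auto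

lemma final_step:
  assumes a: "a \<in> GC" and y: "y \<in> GC" and q: "q \<in> Zc" and k: "CN k"
    and e: "y \<diamond> a \<diamond> gi y = q \<diamond> cls k" and t: "tr (Phi a) = 2 \<or> tr (Phi a) = -2"
  shows "peripheral a"
proof -
  have "Phi (y \<diamond> a \<diamond> gi y) = Phi y * Phi a * adj (Phi y)" using a y by (simp add: Phi_mult Phi_inv)
  then have "tr (Phi (y \<diamond> a \<diamond> gi y)) = tr (Phi a)"
    using tr_comm[of "Phi y * Phi a" "adj (Phi y)"] det_Phi[OF y]
    by (simp add: mult.assoc[symmetric] adj_mult_self)
  moreover have "Phi (q \<diamond> cls k) = Phi q * phiw k" using Zc_carr[OF q] by (simp add: Phi_mult)
  ultimately have tk: "tr (phiw k) = 2 \<or> tr (phiw k) = -2"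
    using e t tr_pm[OF Zc_Phi[OF q], of "phiw k"] by auto
  have qc: "q \<in> GC" using Zc_carr[OF q] .
  show ?thesis
  proof (cases "k = [lc] \<or> k = [ld] \<or> k = [lD]")
    case True
    then show ?thesis using tk by (auto simp: Sm_def Um_def)
  next
    case False
    then obtain es where kes: "k = Ww es" using k unfolding CN_def by blast
    show ?thesis
    proof (cases "False \<in> set es")
      case False
      have "q \<diamond> cls k \<in> PS" using subgroup.m_closed[OF PS_subgroup Zc_PS[OF q] Ww_true_PS[OF False]] kes by simp
      then show ?thesis using periph_back[OF _ y a] periph_PS e by metis
    next
      case True
      then have "True \<notin> set es" using tr_Ww_mixed[of es] tk kes by auto
      then have ck: "cls k = cls [lc] \<diamond> cls (Vw es) \<diamond> gi (cls [lc])" using Ww_false kes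
        by (simp add: inv_cls iw_def)
      have cc: "cls [lc] \<in> GC" by simp
      have "q \<diamond> cls k = (q \<diamond> cls [lc]) \<diamond> cls (Vw es) \<diamond> gi (cls [lc])"
        unfolding ck using qc by (simp add: G.m_assoc)
      also have "\<dots> = cls [lc] \<diamond> (q \<diamond> cls (Vw es)) \<diamond> gi (cls [lc])"
        using Zc_comm[OF q cc] qc by (simp add: G.m_assoc)
      finally have "peripheral (q \<diamond> cls k)"
        using periph_conj[OF periph_PS[OF subgroup.m_closed[OF PS_subgroup Zc_PS[OF q] Vw_PS]] cc] by simp
      then show ?thesis using periph_back[OF _ y a] e by metis
    qed
  qed
qed


lemma gen_Q:
  assumes "\<alpha> \<in> GC" "\<beta> \<in> GC" "closedQ Q" "Q (Phi \<alpha>)" "Q (adj (Phi \<alpha>))" "Q (Phi \<beta>)" "Q (adj (Phi \<beta>))"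
    and "g \<in> generate trefoil_group {\<alpha>, \<beta>}"
  shows "Q (Phi g)"
  using assms(8)
proof (induction rule: generate.induct)
  case one then show ?case using assms(3) by (simp add: closedQ_def Phi_one)
next
  case (incl h) then show ?case using assms(4,6) by auto
next
  case (inv h) then show ?case using assms(1,2,5,7) by (auto simp: Phi_inv)
next
  case (eng h1 h2)
  have "h1 \<in> GC" "h2 \<in> GC" using eng.hyps G.generate_in_carrier[of "{\<alpha>, \<beta>}"] assms(1,2) by auto
  then show ?case using eng.IH assms(3) by (simp add: closedQ_def Phi_mult)
qed

theorem mainTheorem9:
  fixes \<alpha> \<beta> :: "word set"
  assumes "\<alpha> \<in> carrier trefoil_group" and "\<beta> \<in> carrier trefoil_group"
    and "\<exists>x\<in>carrier trefoil_group.
           \<beta> = x \<otimes>\<^bsub>trefoil_group\<^esub> \<alpha> \<otimes>\<^bsub>trefoil_group\<^esub> inv\<^bsub>trefoil_group\<^esub> x"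
    and "generate trefoil_group {\<alpha>, \<beta>} = carrier trefoil_group"
  shows "peripheral \<alpha> \<and> peripheral \<beta>"
proof -
  obtain x where x: "x \<in> GC" and bx: "\<beta> = x \<diamond> \<alpha> \<diamond> gi x" using assms(3) by blast
  define A where "A = Phi \<alpha>"
  define B where "B = Phi \<beta>"
  have dA: "det A = 1" and dB: "det B = 1" using det_Phi assms(1,2) A_def B_def by auto
  have "B = Phi x * A * adj (Phi x)" using x assms(1) unfolding B_def A_def bx by (simp add: Phi_mult Phi_inv)
  then have tB: "tr B = tr A"
    using tr_comm[of "Phi x * A" "adj (Phi x)"] det_Phi[OF x]
    by (simp add: mult.assoc[symmetric] adj_mult_self)
  have gp: "genprop A B"
    unfolding genprop_def
  proof (intro allI impI)
    fix Q assume Q: "closedQ Q" "Q A" "Q (adj A)" "Q B" "Q (adj B)"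
    have all: "Q (Phi g)" if "g \<in> GC" for g
      using gen_Q[OF assms(1,2) Q(1)] Q(2-5) that assms(4) unfolding A_def B_def by blast
    have "Q (Phi (cls [lc]))" "Q (Phi (cls [ld]))" "Q (Phi (cls [lc, ld, lC]))" by (rule all, simp)+
    then show "Q Sm \<and> Q Um \<and> Q V0" by (simp add: V0_def mult.assoc)
  qed
  have t: "tr A = 2 \<or> tr A = -2" by (rule trace_pm2[OF dA dB tB gp])
  obtain y q k where y: "y \<in> GC" and q: "q \<in> Zc" and k: "CN k" and e: "y \<diamond> \<alpha> \<diamond> gi y = q \<diamond> cls k"
    using RP_all[OF assms(1)] unfolding RP_def by blast
  have pa: "peripheral \<alpha>" using final_step[OF assms(1) y q k e] t unfolding A_def by blast
  have pb: "peripheral \<beta>" unfolding bx by (rule periph_conj[OF pa x])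
  show ?thesis using pa pb by blast
qed

end
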